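(* Let $\nu_n,\nu\in\Delta(V)$ with $\nu_n\to\nu$ weakly, and let $p_n,p\in V$ with $p_n\to p$. Then $\pi(c,\nu,p)\ge\limsup_{n\to\infty}\pi(c,\nu_n,p_n)$.
   Context: $V\subset\mathbb{R}$ is compact and $c:V\to\mathbb{R}$ is continuous with $v-c(v)\ge0$ on $V$. $\Delta(V)$ denotes Borel probability measures on $V$. For $\nu\in\Delta(V)$ and $p\in V$, $\pi(c,\nu,p)=\int_{\{v\ge p\}}(p-c(v))\nu(dv)$. *)

theory Defs
  imports "HOL-Probability.Probability"
begin

definition prob_on :: "real set \<Rightarrow> real measure \<Rightarrow> bool" where
  "prob_on V M \<longleftrightarrow> prob_space M \<and> sets M = sets (restrict_space borel V)"

definition weak_conv_on :: "real set \<Rightarrow> (nat \<Rightarrow> real measure) \<Rightarrow> real measure \<Rightarrow> bool" where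
  "weak_conv_on V Ms M \<longleftrightarrow>
     (\<forall>f::real \<Rightarrow> real. continuous_on V f \<longrightarrow>
        (\<lambda>n. integral\<^sup>L (Ms n) f) \<longlonglongrightarrow> integral\<^sup>L M f)"

definition profit :: "(real \<Rightarrow> real) \<Rightarrow> real measure \<Rightarrow> real \<Rightarrow> real" where
  "profit c \<nu> p = (LINT v:{v. p \<le> v}|\<nu>. p - c v)"

end

theory Submission
  imports Defs
begin

lemma space_prob_on: "prob_on V M \<Longrightarrow> space M = V"
  unfolding prob_on_def
  by (metis sets_eq_imp_space_eq space_borel space_restrict_space Int_UNIV_right)

lemma meas_prob_on:
  assumes "prob_on V M" "f \<in> borel_measurable (restrict_space borel V)"
  shows "f \<in> borel_measurable M"
  using assms unfolding prob_on_def
  by (metis measurable_cong_sets)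

lemma intg_prob_on:
  fixes f :: "real \<Rightarrow> real" and B :: real
  assumes "prob_on V M" "f \<in> borel_measurable (restrict_space borel V)"
    and "\<And>v. v \<in> V \<Longrightarrow> \<bar>f v\<bar> \<le> B"
  shows "integrable M f"
proof -
  interpret prob_space M using assms(1) unfolding prob_on_def by simp
  show ?thesis
    by (rule integrable_const_bound[where B=B])
       (use assms space_prob_on[OF assms(1)] meas_prob_on[OF assms(1,2)] in auto)
qed

lemma meas_g:
  fixes c :: "real \<Rightarrow> real" and q :: real
  assumes "continuous_on V c"
  shows "(\<lambda>v. indicator {v. q \<le> v} v * (q - c v)) \<in> borel_measurable (restrict_space borel V)"
proof -
  have "(\<lambda>v::real. indicator {v. q \<le> v} v :: real) \<in> borel_measurable borel"
    by measurable
  then have 1: "(\<lambda>v::real. indicator {v. q \<le> v} v :: real) \<in> borel_measurable (restrict_space borel V)"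
    by (rule measurable_restrict_space1)
  have 2: "(\<lambda>v. q - c v) \<in> borel_measurable (restrict_space borel V)"
    by (rule borel_measurable_continuous_on_restrict) (intro continuous_intros assms)
  show ?thesis using 1 2 by measurable
qed

lemma profit_eq: "profit c M q = integral\<^sup>L M (\<lambda>v. indicator {v. q \<le> v} v * (q - c v))"
  unfolding profit_def set_lebesgue_integral_def by simp


theorem lemmaI3:
  fixes V :: "real set" and c :: "real \<Rightarrow> real"
    and \<nu>s :: "nat \<Rightarrow> real measure" and \<nu> :: "real measure"
    and ps :: "nat \<Rightarrow> real" and p :: real
  assumes "compact V"
    and "continuous_on V c"
    and "\<forall>v\<in>V. v - c v \<ge> 0"
    and "\<forall>n. prob_on V (\<nu>s n)"
    and "prob_on V \<nu>"
    and "weak_conv_on V \<nu>s \<nu>"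
    and "\<forall>n. ps n \<in> V" and "p \<in> V"
    and "ps \<longlonglongrightarrow> p"
  shows "limsup (\<lambda>n. ereal (profit c (\<nu>s n) (ps n))) \<le> ereal (profit c \<nu> p)"
proof -
  note cc = assms(2) and Vp = assms(8) and psV = assms(7)
  have "bounded (c ` V)"
    by (intro compact_imp_bounded compact_continuous_image assms(1,2))
  then obtain C where C: "\<And>v. v \<in> V \<Longrightarrow> \<bar>c v\<bar> \<le> C"
    by (auto simp: bounded_iff)
  have "bounded V" by (intro compact_imp_bounded assms(1))
  then obtain R where R: "\<And>v. v \<in> V \<Longrightarrow> \<bar>v\<bar> \<le> R"
    by (auto simp: bounded_iff)
  define K where "K = R + C"
  have bndk: "\<And>q v. q \<in> V \<Longrightarrow> v \<in> V \<Longrightarrow> \<bar>q - c v\<bar> \<le> K"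
    unfolding K_def using C R by (smt (verit))
  have Kpos: "0 \<le> K" using bndk[OF assms(8) assms(8)] by linarith
  let ?L = "limsup (\<lambda>n. ereal (profit c (\<nu>s n) (ps n)))"
  have key: "?L \<le> ereal (profit c \<nu> p + 2 * \<epsilon>)" if epos: "\<epsilon> > 0" for \<epsilon> :: real
  proof -
    obtain d where dpos: "d > 0" and dc: "\<And>v. v \<in> V \<Longrightarrow> \<bar>v - p\<bar> < d \<Longrightarrow> \<bar>c v - c p\<bar> < \<epsilon>"
      using cc Vp epos unfolding continuous_on_iff dist_real_def by blast
    define \<delta>0 where "\<delta>0 = d / 3"
    have d0pos: "\<delta>0 > 0" using dpos by (simp add: \<delta>0_def)
    have cp: "c p \<le> p" using assms(3) Vp by auto
    have kpos: "p - c v \<ge> - \<epsilon>" if "v \<in> V" "\<bar>v - p\<bar> \<le> 2 * \<delta>0" for v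
    proof -
      have "\<bar>v - p\<bar> < d" using that dpos by (simp add: \<delta>0_def)
      then have "\<bar>c v - c p\<bar> < \<epsilon>" using dc that by blast
      then show ?thesis using cp by linarith
    qed
    define t where "t \<delta> v = max 0 (min 1 ((v - p + 2 * \<delta>) / \<delta>))" for \<delta> v :: real
    define F where "F \<delta> v = t \<delta> v * (p - c v)" for \<delta> v
    have t01: "0 \<le> t \<delta> v" "t \<delta> v \<le> 1" for \<delta> v unfolding t_def by auto
    have contF: "continuous_on V (F \<delta>)" for \<delta>
    proof (cases "\<delta> = 0")
      case True
      then show ?thesis unfolding F_def t_def by (simp add: continuous_intros cc)
    next
      case False
      then show ?thesis unfolding F_def t_def by (intro continuous_intros cc) auto
    qed
    have Fbd: "\<bar>F \<delta> v\<bar> \<le> K" if "v \<in> V" for \<delta> v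
    proof -
      have "\<bar>F \<delta> v\<bar> = t \<delta> v * \<bar>p - c v\<bar>" unfolding F_def using t01 by (simp add: abs_mult)
      also have "\<dots> \<le> 1 * \<bar>p - c v\<bar>" using t01 by (intro mult_right_mono) auto
      finally show ?thesis using bndk[OF Vp that] by simp
    qed
    have measF: "F \<delta> \<in> borel_measurable (restrict_space borel V)" for \<delta>
      by (rule borel_measurable_continuous_on_restrict[OF contF])
    have A: "?L \<le> ereal (integral\<^sup>L \<nu> (F \<delta>) + 2 * \<epsilon>)" if dpos': "0 < \<delta>" "\<delta> \<le> \<delta>0" for \<delta>
    proof -
      have "eventually (\<lambda>n. dist (ps n) p < min \<delta> \<epsilon>) sequentially"
        using assms(9) dpos' epos unfolding tendsto_iff by (simp add: eventually_conj)
      then have ev: "eventually (\<lambda>n. ereal (profit c (\<nu>s n) (ps n)) \<le>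
            ereal (integral\<^sup>L (\<nu>s n) (F \<delta>) + 2 * \<epsilon>)) sequentially"
      proof eventually_elim
        case (elim n)
        have Pn: "prob_on V (\<nu>s n)" using assms(4) by blast
        interpret prob_space "\<nu>s n" using Pn unfolding prob_on_def by simp
        have qn: "\<bar>ps n - p\<bar> < \<delta>" "\<bar>ps n - p\<bar> < \<epsilon>" using elim by (auto simp: dist_real_def)
        have pw: "indicator {v. ps n \<le> v} v * (ps n - c v) \<le> F \<delta> v + 2 * \<epsilon>" if vV: "v \<in> V" for v
        proof (cases "v < ps n")
          case True
          have "F \<delta> v \<ge> - \<epsilon>"
          proof (cases "v \<le> p - 2 * \<delta>")
            case True
            then have "(v - p + 2 * \<delta>) / \<delta> \<le> 0" using dpos' by (simp add: divide_nonpos_pos)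
            then have "t \<delta> v = 0" unfolding t_def by simp
            then show ?thesis using epos by (simp add: F_def)
          next
            case False
            have "\<bar>v - p\<bar> \<le> 2 * \<delta>0" using False True qn dpos' by auto
            then have k: "p - c v \<ge> - \<epsilon>" using kpos vV by blast
            have "t \<delta> v * (p - c v) \<ge> t \<delta> v * (- \<epsilon>)" using k t01 by (intro mult_left_mono) auto
            moreover have "t \<delta> v * \<epsilon> \<le> 1 * \<epsilon>" using t01[of \<delta> v] epos by (intro mult_right_mono) auto
            then have "t \<delta> v * (- \<epsilon>) \<ge> - \<epsilon>" by simp
            ultimately show ?thesis by (simp add: F_def)
          qed
          then show ?thesis using True epos by simp
        next
          case False
          have "(v - p + 2 * \<delta>) / \<delta> \<ge> 1" using False qn dpos' by (simp add: field_simps)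
          then have "t \<delta> v = 1" unfolding t_def by simp
          then show ?thesis using False qn epos by (simp add: F_def)
        qed
        have "profit c (\<nu>s n) (ps n) = integral\<^sup>L (\<nu>s n) (\<lambda>v. indicator {v. ps n \<le> v} v * (ps n - c v))"
          by (rule profit_eq)
        also have "\<dots> \<le> integral\<^sup>L (\<nu>s n) (\<lambda>v. F \<delta> v + 2 * \<epsilon>)"
        proof (rule integral_mono)
          show "integrable (\<nu>s n) (\<lambda>v. indicator {v. ps n \<le> v} v * (ps n - c v))"
            by (rule intg_prob_on[OF Pn meas_g[OF cc], where B=K])
               (use bndk psV Kpos in \<open>auto simp: indicator_def\<close>)
          show "integrable (\<nu>s n) (\<lambda>v. F \<delta> v + 2 * \<epsilon>)"
            by (rule intg_prob_on[OF Pn, where B="K + 2 * \<epsilon>"])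
               (use measF epos in \<open>auto intro!: borel_measurable_add\<close>,
                use Fbd epos in \<open>smt (verit)\<close>)
          show "\<And>v. v \<in> space (\<nu>s n) \<Longrightarrow> indicator {v. ps n \<le> v} v * (ps n - c v) \<le> F \<delta> v + 2 * \<epsilon>"
            using pw space_prob_on[OF Pn] by blast
        qed
        also have "\<dots> = integral\<^sup>L (\<nu>s n) (F \<delta>) + 2 * \<epsilon>"
        proof -
          have "integrable (\<nu>s n) (F \<delta>)"
            by (rule intg_prob_on[OF Pn measF, where B=K]) (use Fbd in auto)
          then show ?thesis by (simp add: prob_space)
        qed
        finally show ?case by simp
      qed
      have "(\<lambda>n. integral\<^sup>L (\<nu>s n) (F \<delta>)) \<longlonglongrightarrow> integral\<^sup>L \<nu> (F \<delta>)"
        using assms(6) contF unfolding weak_conv_on_def by blast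
      then have lim: "(\<lambda>n. ereal (integral\<^sup>L (\<nu>s n) (F \<delta>) + 2 * \<epsilon>)) \<longlonglongrightarrow> ereal (integral\<^sup>L \<nu> (F \<delta>) + 2 * \<epsilon>)"
        by (intro tendsto_intros)
      have "?L \<le> limsup (\<lambda>n. ereal (integral\<^sup>L (\<nu>s n) (F \<delta>) + 2 * \<epsilon>))"
        by (rule Limsup_mono[OF ev])
      also have "\<dots> = ereal (integral\<^sup>L \<nu> (F \<delta>) + 2 * \<epsilon>)"
        by (rule lim_imp_Limsup[OF _ lim]) simp
      finally show ?thesis .
    qed
    define \<delta>s where "\<delta>s m = \<delta>0 / (real m + 1)" for m :: nat
    have dspos: "0 < \<delta>s m" "\<delta>s m \<le> \<delta>0" for m
      unfolding \<delta>s_def using d0pos by (auto simp: field_simps)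
    have B: "(\<lambda>m. integral\<^sup>L \<nu> (F (\<delta>s m))) \<longlonglongrightarrow> integral\<^sup>L \<nu> (\<lambda>v. indicator {v. p \<le> v} v * (p - c v))"
    proof (rule integral_dominated_convergence[where w="\<lambda>_. K"])
      show "(\<lambda>v. indicator {v. p \<le> v} v * (p - c v)) \<in> borel_measurable \<nu>"
        by (rule meas_prob_on[OF assms(5) meas_g[OF cc]])
      show "\<And>i. F (\<delta>s i) \<in> borel_measurable \<nu>"
        by (rule meas_prob_on[OF assms(5) measF])
      show "integrable \<nu> (\<lambda>_. K)"
        by (rule intg_prob_on[OF assms(5), where B=K]) (use Kpos in auto)
      show "\<And>i. AE x in \<nu>. norm (F (\<delta>s i) x) \<le> K"
        using Fbd space_prob_on[OF assms(5)] by (auto intro!: AE_I2)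
      show "AE x in \<nu>. (\<lambda>i. F (\<delta>s i) x) \<longlonglongrightarrow> indicator {v. p \<le> v} x * (p - c x)"
      proof (rule AE_I2)
        fix v
        show "(\<lambda>i. F (\<delta>s i) v) \<longlonglongrightarrow> indicator {v. p \<le> v} v * (p - c v)"
        proof (cases "p \<le> v")
          case True
          have "t (\<delta>s i) v = 1" for i
          proof -
            have "(v - p + 2 * \<delta>s i) / \<delta>s i \<ge> 1" using True dspos[of i] by (simp add: field_simps)
            then show ?thesis unfolding t_def by simp
          qed
          then show ?thesis using True by (simp add: F_def)
        next
          case False
          obtain N :: nat where N: "2 * \<delta>0 / (p - v) < real N"
            using reals_Archimedean2 by blast
          have "t (\<delta>s i) v = 0" if "i \<ge> N" for i
          proof -
            have "2 * \<delta>0 / (p - v) < real i + 1" using N that by linarith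
            then have "2 * \<delta>0 < (real i + 1) * (p - v)" using False by (simp add: field_simps)
            then have "2 * \<delta>s i \<le> p - v" unfolding \<delta>s_def by (simp add: field_simps)
            then have "(v - p + 2 * \<delta>s i) / \<delta>s i \<le> 0" using dspos[of i] by (simp add: divide_nonpos_pos)
            then show ?thesis unfolding t_def by simp
          qed
          then have "eventually (\<lambda>i. F (\<delta>s i) v = 0) sequentially"
            unfolding F_def eventually_sequentially by auto
          then have "(\<lambda>i. F (\<delta>s i) v) \<longlonglongrightarrow> 0"
            by (rule tendsto_eventually)
          then show ?thesis using False by simp
        qed
      qed
    qed
    then have B': "(\<lambda>m. ereal (integral\<^sup>L \<nu> (F (\<delta>s m)) + 2 * \<epsilon>)) \<longlonglongrightarrow> ereal (profit c \<nu> p + 2 * \<epsilon>)"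
      unfolding profit_eq by (intro tendsto_intros)
    show ?thesis
      by (rule LIMSEQ_le_const[OF B']) (use A dspos in auto)
  qed
  show ?thesis
  proof (rule ereal_le_epsilon2)
    fix e :: real assume "0 < e"
    then have "?L \<le> ereal (profit c \<nu> p + 2 * (e / 2))" by (intro key) simp
    then show "?L \<le> ereal (profit c \<nu> p) + ereal e" by simp
  qed
qed

end
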